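(* Consider a diffeomorphism geometric wavelet transform (DGWT) as in the context and let $m\in\{2,\ldots,M\}$. Then for every $(y_m,g_m)\in Y_m\times N_m$ and every $g_m'\in N_m$, $$|\det J(y_m,g_m'^{-1}g_m)|=|\det D_m(g_m')|\,|\det J(y_m,g_m)|,$$ where $J$ is the Jacobian of $C_m$.
   Context: Physical quantities are the groups $(\mathbb{R},+)$, $(e^{i\mathbb{R}},\cdot)$, $(\mathbb{Z},+)$, $(e^{2\pi i\mathbb{Z}/n},\cdot)$. Let $M\ge 2$; for $m=2,\ldots,M$ let $N_m=G_m^1\times\cdots\times G_m^{K_m}$ be a direct product of copies of one physical quantity, with elements $g_m$ and operation $\bullet$. $H_1$ is the nested semidirect product $H_{M-1}=N_M$, $H_{m}=N_{m+1}\rtimes H_{m+1}$, elements $h_m=(g_{m+1},\ldots,g_M)$, product $(g_m,h_m)(g_m',h_m')=(g_m\bullet A_m(h_m)g_m',h_mh_m')$ with $A_m$ a smooth action by automorphisms. $D:H_1\to GL(\mathbb{R}^N)$ is a representation, $D_m=D|_{N_m}$, $D(h_1)=D_2(g_2)\cdots D_M(g_M)$. $G=\mathbb{R}^N\rtimes H_1$ with $(x,h_1)(x',h_1')=(x+D(h_1)x',h_1h_1')$, $A_1(h_1)=D(h_1)$. Frequencies are row vectors; $U=\omega_0D(H_1)$ is open dense for some $\omega_0$. The representation $\hat\pi(g)\hat f(\omega)=|\det D(h_1)|^{1/2}e^{i\omega\cdot g_1}\hat f(\omega D(h_1))$ on $L^2(U)$ (frequency form of $\pi(g)f(x)=|\det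 D(h_1)^{-1}|^{1/2}f(D(h_1)^{-1}(x-g_1))$) is assumed square integrable, and the resulting wavelet transform is assumed simply dilated: for each $m$ there is a $quantity_m$ transform, i.e. a bounded linear $\Psi_m:L^2(U)\to L^2(Y_m\times N_m)$ with $\Psi_m\pi_m(g_m')\Psi_m^*=L_m(g_m')$ ($[L_mF](y,g_m)=F(y,g_m'^{-1}g_m)$, $\pi_m$ the restriction of $\hat\pi$ to $N_m$) and $\rho^m(g')^*\breve{\mathbf Q}_m\rho^m(g')=g_m'\bullet A_m(h_m')\breve{\mathbf Q}_m$ with $\rho^m=\Psi_m\hat\pi\Psi_m^*$ and $\breve{\mathbf Q}_m$ the tuple of multiplications by $g_m^k$; and $A_m=I$ when $G_m^1$ is $e^{i\mathbb{R}}$ or $e^{2\pi i\mathbb{Z}/n}$. DGWT: for each $m=2,\ldots,M$, with $Y_m=\prod_{j\ne 1,m}N_j$, $y_m=(g_j)_{j\ne1,m}$, $D^m(y_m)=\prod_{j\neq 1,m}D_j(g_j)$ (in increasing order of $j$), there is $\omega_m$ with $C_m(y_m,g_m)=\omega_mD^m(y_m)D_m(g_m^{-1})$ a diffeomorphism $Y_m\times N_m\to U$; $J(y_m,g_m)$ denotes the Jacobian of $C_m$ with respect to the product of the standard Riemannian structures. *)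

theory Defs
  imports "HOL-Analysis.Analysis"
begin

text \<open>The four physical quantities, all realised inside the complex numbers:
  RealLine = (R,+), Circle = (e^{iR},*), Integers = (Z,+), Roots n = (e^{2 pi i Z/n},*).\<close>

datatype quantity = RealLine | Circle | Integers | Roots nat

fun qcarrier :: "quantity \<Rightarrow> complex set" where
  "qcarrier RealLine = range complex_of_real"
| "qcarrier Circle = {z. cmod z = 1}"
| "qcarrier Integers = range (\<lambda>k::int. of_int k)"
| "qcarrier (Roots n) = {z. z ^ n = 1}"

fun additive :: "quantity \<Rightarrow> bool" where
  "additive RealLine = True"
| "additive Integers = True"
| "additive Circle = False"
| "additive (Roots n) = False"

fun continuous_q :: "quantity \<Rightarrow> bool" where
  "continuous_q RealLine = True"
| "continuous_q Circle = True"
| "continuous_q Integers = False"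
| "continuous_q (Roots n) = False"

definition qop :: "quantity \<Rightarrow> complex \<Rightarrow> complex \<Rightarrow> complex" where
  "qop q a b = (if additive q then a + b else a * b)"

definition qinv :: "quantity \<Rightarrow> complex \<Rightarrow> complex" where
  "qinv q a = (if additive q then - a else inverse a)"

definition qunit :: "quantity \<Rightarrow> complex" where
  "qunit q = (if additive q then 0 else 1)"

text \<open>Standard local (isometric) coordinate around a point of a continuous quantity:
  translation on R, rotation by the angle t on the circle; discrete quantities have no
  continuous coordinate.\<close>
definition qshift :: "quantity \<Rightarrow> complex \<Rightarrow> real \<Rightarrow> complex" where
  "qshift q g t = (if q = RealLine then g + complex_of_real t
                   else if q = Circle then g * cis t else g)"

definition Ncarrier :: "quantity \<Rightarrow> nat \<Rightarrow> (nat \<Rightarrow> complex) set" where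
  "Ncarrier q K = {g. (\<forall>k<K. g k \<in> qcarrier q) \<and> (\<forall>k\<ge>K. g k = 0)}"

definition Nmul :: "quantity \<Rightarrow> nat \<Rightarrow> (nat \<Rightarrow> complex) \<Rightarrow> (nat \<Rightarrow> complex) \<Rightarrow> (nat \<Rightarrow> complex)" where
  "Nmul q K g g' = (\<lambda>k. if k < K then qop q (g k) (g' k) else 0)"

definition Ninv :: "quantity \<Rightarrow> nat \<Rightarrow> (nat \<Rightarrow> complex) \<Rightarrow> (nat \<Rightarrow> complex)" where
  "Ninv q K g = (\<lambda>k. if k < K then qinv q (g k) else 0)"

definition Nunit :: "quantity \<Rightarrow> nat \<Rightarrow> (nat \<Rightarrow> complex)" where
  "Nunit q K = (\<lambda>k. if k < K then qunit q else 0)"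

type_synonym tuple = "nat \<Rightarrow> nat \<Rightarrow> complex"

definition Tcarrier :: "(nat \<Rightarrow> quantity) \<Rightarrow> (nat \<Rightarrow> nat) \<Rightarrow> nat set \<Rightarrow> tuple set" where
  "Tcarrier Q K S = {h. (\<forall>j\<in>S. h j \<in> Ncarrier (Q j) (K j)) \<and> (\<forall>j. j \<notin> S \<longrightarrow> h j = (\<lambda>_. 0))}"

definition Hcarrier :: "nat \<Rightarrow> (nat \<Rightarrow> quantity) \<Rightarrow> (nat \<Rightarrow> nat) \<Rightarrow> tuple set" where
  "Hcarrier M Q K = Tcarrier Q K {2..M}"

definition Ycarrier :: "nat \<Rightarrow> (nat \<Rightarrow> quantity) \<Rightarrow> (nat \<Rightarrow> nat) \<Rightarrow> nat \<Rightarrow> tuple set" where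
  "Ycarrier M Q K m = Tcarrier Q K ({2..M} - {m})"

definition tail :: "nat \<Rightarrow> tuple \<Rightarrow> tuple" where
  "tail j h = (\<lambda>i. if j < i then h i else (\<lambda>_. 0))"

text \<open>Product of the nested semidirect product H_1: component j of h h' is
  g_j . A_j(h_j) g'_j  (this is the unfolding of the recursive definition).\<close>
definition Hmul :: "nat \<Rightarrow> (nat \<Rightarrow> quantity) \<Rightarrow> (nat \<Rightarrow> nat)
     \<Rightarrow> (nat \<Rightarrow> tuple \<Rightarrow> (nat \<Rightarrow> complex) \<Rightarrow> (nat \<Rightarrow> complex)) \<Rightarrow> tuple \<Rightarrow> tuple \<Rightarrow> tuple" where
  "Hmul M Q K A h h' = (\<lambda>j. if j \<in> {2..M} then Nmul (Q j) (K j) (h j) (A j (tail j h) (h' j))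
                             else (\<lambda>_. 0))"

definition Hunit :: "nat \<Rightarrow> (nat \<Rightarrow> quantity) \<Rightarrow> (nat \<Rightarrow> nat) \<Rightarrow> tuple" where
  "Hunit M Q K = (\<lambda>j. if j \<in> {2..M} then Nunit (Q j) (K j) else (\<lambda>_. 0))"

definition Dprod :: "(nat \<Rightarrow> (nat \<Rightarrow> complex) \<Rightarrow> real^'n^'n) \<Rightarrow> tuple \<Rightarrow> nat list \<Rightarrow> real^'n^'n" where
  "Dprod D h js = foldr (\<lambda>j B. D j (h j) ** B) js (mat 1)"

definition Dfull :: "nat \<Rightarrow> (nat \<Rightarrow> (nat \<Rightarrow> complex) \<Rightarrow> real^'n^'n) \<Rightarrow> tuple \<Rightarrow> real^'n^'n" where
  "Dfull M D h = Dprod D h [2..<Suc M]"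

definition Dm_other :: "nat \<Rightarrow> nat \<Rightarrow> (nat \<Rightarrow> (nat \<Rightarrow> complex) \<Rightarrow> real^'n^'n) \<Rightarrow> tuple \<Rightarrow> real^'n^'n" where
  "Dm_other M m D y = Dprod D y (filter (\<lambda>j. j \<noteq> m) [2..<Suc M])"

definition group_setting ::
  "nat \<Rightarrow> (nat \<Rightarrow> quantity) \<Rightarrow> (nat \<Rightarrow> nat)
   \<Rightarrow> (nat \<Rightarrow> tuple \<Rightarrow> (nat \<Rightarrow> complex) \<Rightarrow> (nat \<Rightarrow> complex))
   \<Rightarrow> (nat \<Rightarrow> (nat \<Rightarrow> complex) \<Rightarrow> real^'n^'n) \<Rightarrow> bool" where
  "group_setting M Q K A D \<longleftrightarrow>
     2 \<le> M \<and>
     (\<forall>j\<in>{2..M}. \<forall>n. Q j = Roots n \<longrightarrow> n \<ge> 1) \<and>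
     \<comment> \<open>A_j(h_j) is an automorphism of N_j for every h_j in H_j\<close>
     (\<forall>j\<in>{2..M}. \<forall>h\<in>Tcarrier Q K {Suc j..M}.
        bij_betw (A j h) (Ncarrier (Q j) (K j)) (Ncarrier (Q j) (K j)) \<and>
        (\<forall>g\<in>Ncarrier (Q j) (K j). \<forall>g'\<in>Ncarrier (Q j) (K j).
           A j h (Nmul (Q j) (K j) g g') = Nmul (Q j) (K j) (A j h g) (A j h g'))) \<and>
     \<comment> \<open>A_j is an action of H_j\<close>
     (\<forall>j\<in>{2..M}. \<forall>g\<in>Ncarrier (Q j) (K j). A j (tail j (Hunit M Q K)) g = g) \<and>
     (\<forall>j\<in>{2..M}. \<forall>h\<in>Hcarrier M Q K. \<forall>h'\<in>Hcarrier M Q K. \<forall>g\<in>Ncarrier (Q j) (K j).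
        A j (tail j (Hmul M Q K A h h')) g = A j (tail j h) (A j (tail j h') g)) \<and>
     \<comment> \<open>A_j is trivial for circle and root-of-unity quantities\<close>
     (\<forall>j\<in>{2..M}. \<not> additive (Q j) \<longrightarrow> (\<forall>h. \<forall>g\<in>Ncarrier (Q j) (K j). A j h g = g)) \<and>
     \<comment> \<open>D takes values in GL and is a representation of H_1\<close>
     (\<forall>j\<in>{2..M}. \<forall>g\<in>Ncarrier (Q j) (K j). invertible (D j g)) \<and>
     \<comment> \<open>D_j = D restricted to N_j (embedded with all other components the identity)\<close>
     (\<forall>j\<in>{2..M}. D j (Nunit (Q j) (K j)) = mat 1) \<and>
     (\<forall>h\<in>Hcarrier M Q K. \<forall>h'\<in>Hcarrier M Q K.
        Dfull M D (Hmul M Q K A h h') = Dfull M D h ** Dfull M D h')"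

definition Uset :: "nat \<Rightarrow> (nat \<Rightarrow> quantity) \<Rightarrow> (nat \<Rightarrow> nat)
     \<Rightarrow> (nat \<Rightarrow> (nat \<Rightarrow> complex) \<Rightarrow> real^'n^'n) \<Rightarrow> real^'n \<Rightarrow> (real^'n) set" where
  "Uset M Q K D w0 = (\<lambda>h. w0 v* Dfull M D h) ` Hcarrier M Q K"

text \<open>C_m(y_m, g_m) = omega_m D^m(y_m) D_m(g_m^{-1}); frequencies are row vectors.\<close>
definition Cm :: "nat \<Rightarrow> nat \<Rightarrow> (nat \<Rightarrow> quantity) \<Rightarrow> (nat \<Rightarrow> nat)
     \<Rightarrow> (nat \<Rightarrow> (nat \<Rightarrow> complex) \<Rightarrow> real^'n^'n) \<Rightarrow> real^'n \<Rightarrow> tuple \<Rightarrow> (nat \<Rightarrow> complex) \<Rightarrow> real^'n" where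
  "Cm M m Q K D w y g = w v* (Dm_other M m D y ** D m (Ninv (Q m) (K m) g))"

definition contI :: "nat \<Rightarrow> (nat \<Rightarrow> quantity) \<Rightarrow> (nat \<Rightarrow> nat) \<Rightarrow> (nat \<times> nat) set" where
  "contI M Q K = {(j, k). j \<in> {2..M} \<and> k < K j \<and> continuous_q (Q j)}"

text \<open>A fixed enumeration of the continuous coordinates by the index type 'n of R^N
  (exists whenever there are exactly N continuous coordinates; the absolute value of
  the Jacobian determinant does not depend on the choice).\<close>
definition coord_enum :: "nat \<Rightarrow> (nat \<Rightarrow> quantity) \<Rightarrow> (nat \<Rightarrow> nat) \<Rightarrow> 'n::finite \<Rightarrow> nat \<times> nat" where
  "coord_enum M Q K = (SOME e. bij_betw e UNIV (contI M Q K))"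

definition chart :: "nat \<Rightarrow> (nat \<Rightarrow> quantity) \<Rightarrow> (nat \<Rightarrow> nat) \<Rightarrow> tuple \<Rightarrow> real^'n::finite \<Rightarrow> tuple" where
  "chart M Q K p t = (\<lambda>j k. if (j, k) \<in> contI M Q K
       then qshift (Q j) (p j k) (t $ inv (coord_enum M Q K :: 'n \<Rightarrow> nat \<times> nat) (j, k))
       else p j k)"

text \<open>Jacobian matrix (w.r.t. the standard Riemannian structures) at the point p of a map F
  defined on Y_m x N_m, where the point (y_m, g_m) is encoded as the tuple y_m(m := g_m).\<close>
definition jacobian :: "nat \<Rightarrow> (nat \<Rightarrow> quantity) \<Rightarrow> (nat \<Rightarrow> nat) \<Rightarrow> (tuple \<Rightarrow> real^'n) \<Rightarrow> tuple \<Rightarrow> real^'n^'n" where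
  "jacobian M Q K F p = matrix (frechet_derivative (\<lambda>t::real^'n. F (chart M Q K p t)) (at 0))"

definition pderiv_dir :: "'n::finite \<Rightarrow> (real^'n \<Rightarrow> real^'m) \<Rightarrow> real^'n \<Rightarrow> real^'m" where
  "pderiv_dir i f x = vector_derivative (\<lambda>s. f (x + s *\<^sub>R axis i 1)) (at 0)"

fun iter_pderiv :: "'n::finite list \<Rightarrow> (real^'n \<Rightarrow> real^'m) \<Rightarrow> real^'n \<Rightarrow> real^'m" where
  "iter_pderiv [] f = f"
| "iter_pderiv (i # is) f = pderiv_dir i (iter_pderiv is f)"

definition smooth_on :: "(real^'n::finite) set \<Rightarrow> (real^'n \<Rightarrow> real^'m) \<Rightarrow> bool" where
  "smooth_on S f \<longleftrightarrow> open S \<and>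
     (\<forall>is. \<forall>i. \<forall>x\<in>S. ((\<lambda>s. iter_pderiv is f (x + s *\<^sub>R axis i 1))
                          has_vector_derivative iter_pderiv (i # is) f x) (at 0)) \<and>
     (\<forall>is. continuous_on S (iter_pderiv is f))"

text \<open>C_m is a diffeomorphism Y_m x N_m -> U: a bijection which in the standard local
  charts is smooth with invertible derivative (a bijective local diffeomorphism is a
  diffeomorphism); the dimension count N = number of continuous coordinates is part of it.\<close>
definition DGWT_diffeo ::
  "nat \<Rightarrow> nat \<Rightarrow> (nat \<Rightarrow> quantity) \<Rightarrow> (nat \<Rightarrow> nat)
   \<Rightarrow> (nat \<Rightarrow> (nat \<Rightarrow> complex) \<Rightarrow> real^'n::finite^'n) \<Rightarrow> real^'n \<Rightarrow> (real^'n) set \<Rightarrow> bool" where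
  "DGWT_diffeo M m Q K D w U \<longleftrightarrow>
     card (contI M Q K) = CARD('n) \<and>
     bij_betw (\<lambda>(y, g). Cm M m Q K D w y g) (Ycarrier M Q K m \<times> Ncarrier (Q m) (K m)) U \<and>
     (\<forall>y\<in>Ycarrier M Q K m. \<forall>g\<in>Ncarrier (Q m) (K m).
        \<exists>S. 0 \<in> S \<and>
          smooth_on S (\<lambda>t::real^'n. Cm M m Q K D w (chart M Q K (y(m := g)) t)
                                               (chart M Q K (y(m := g)) t m)) \<and>
          invertible (jacobian M Q K (\<lambda>p. Cm M m Q K D w p (p m)) (y(m := g))))"

end

theory Submission
  imports Defs
begin


lemma mvt_1d:
  fixes \<phi> :: "real \<Rightarrow> 'b::real_normed_vector"
  assumes d: "\<And>s. s \<in> closed_segment 0 a \<Longrightarrow> (\<phi> has_vector_derivative \<phi>' s) (at s)"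
    and b: "\<And>s. s \<in> closed_segment 0 a \<Longrightarrow> norm (\<phi>' s) \<le> B" and B: "0 \<le> B"
  shows "norm (\<phi> a - \<phi> 0) \<le> B * \<bar>a\<bar>"
proof -
  have "norm (\<phi> a - \<phi> 0) \<le> B * norm (a - 0)"
  proof (rule differentiable_bound[where f'="\<lambda>s u. u *\<^sub>R \<phi>' s"])
    show "convex (closed_segment 0 a)" by simp
    fix s assume s: "s \<in> closed_segment 0 a"
    show "(\<phi> has_derivative (\<lambda>u. u *\<^sub>R \<phi>' s)) (at s within closed_segment 0 a)"
      using d[OF s] unfolding has_vector_derivative_def by (rule has_derivative_at_withinI)
    show "onorm (\<lambda>u. u *\<^sub>R \<phi>' s) \<le> B"
    proof (rule onorm_bound[OF B])
      fix u :: real show "norm (u *\<^sub>R \<phi>' s) \<le> B * norm u"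
        using b[OF s] by (simp add: mult.commute[of B] mult_left_mono)
    qed
  qed auto
  then show ?thesis by simp
qed


definition proj :: "'n::finite set \<Rightarrow> real^'n \<Rightarrow> real^'n" where
  "proj I h = (\<chi> k. if k \<in> I then h$k else 0)"

lemma partials_step:
  fixes f :: "real^'n::finite \<Rightarrow> 'b::real_normed_vector"
  assumes S: "open S" "x \<in> S"
    and pd: "\<And>i z. z \<in> S \<Longrightarrow> ((\<lambda>s. f (z + s *\<^sub>R axis i 1)) has_vector_derivative P i z) (at 0)"
    and pc: "\<And>i. continuous_on S (P i)"
    and fin: "finite I"
  shows "\<forall>e>0. \<exists>d>0. \<forall>h. norm h < d \<longrightarrow>
           norm (f (x + proj I h) - f x - (\<Sum>i\<in>I. h$i *\<^sub>R P i x)) \<le> e * norm h"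
  using fin
proof (induction I rule: finite_induct)
  case empty
  have pe: "proj {} h = 0" for h by (simp add: proj_def vec_eq_iff)
  show ?case
  proof (intro allI impI)
    fix e :: real assume "e > 0"
    show "\<exists>d>0. \<forall>h. norm h < d \<longrightarrow> norm (f (x + proj {} h) - f x - (\<Sum>i\<in>{}. h$i *\<^sub>R P i x)) \<le> e * norm h"
      using \<open>e > 0\<close> by (intro exI[of _ 1]) (simp add: pe)
  qed
next
  case (insert j I)
  show ?case
  proof (intro allI impI)
    fix e :: real assume e: "e > 0"
    obtain d1 where d1: "d1 > 0" and D1: "\<And>h. norm h < d1 \<Longrightarrow>
           norm (f (x + proj I h) - f x - (\<Sum>i\<in>I. h$i *\<^sub>R P i x)) \<le> e/2 * norm h"
      using insert.IH e by (meson half_gt_zero)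
    have "isCont (P j) x" using pc S continuous_on_eq_continuous_at by blast
    then obtain d2 where d2: "d2 > 0" and D2: "\<And>y. dist y x < d2 \<Longrightarrow> dist (P j y) (P j x) < e/2"
      using e unfolding continuous_at_eps_delta by (meson half_gt_zero)
    obtain d3 where d3: "d3 > 0" and D3: "ball x d3 \<subseteq> S"
      using S open_contains_ball by blast
    define d where "d = min d1 (min d2 d3)"
    have "d > 0" using d1 d2 d3 by (simp add: d_def)
    moreover have "norm (f (x + proj (insert j I) h) - f x - (\<Sum>i\<in>insert j I. h$i *\<^sub>R P i x)) \<le> e * norm h"
      if h: "norm h < d" for h
    proof -
      define z where "z = x + proj I h"
      define a where "a = h$j"
      define \<phi> where "\<phi> = (\<lambda>s. f (z + s *\<^sub>R axis j 1) - s *\<^sub>R P j x)"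
      have zq: "z + s *\<^sub>R axis j 1 = x + (\<chi> k. if k \<in> I then h$k else if k = j then s else 0)" for s
        using insert.hyps(2) by (auto simp: z_def proj_def vec_eq_iff axis_def)
      have nq: "norm (\<chi> k. if k \<in> I then h$k else if k = j then s else 0) \<le> norm h"
        if s: "s \<in> closed_segment 0 a" for s
      proof (rule norm_le_componentwise_cart)
        fix k
        have "\<bar>s\<bar> \<le> \<bar>a\<bar>" using s by (auto simp: closed_segment_eq_real_ivl split: if_splits)
        then show "norm ((\<chi> k. if k \<in> I then h$k else if k = j then s else 0) $ k) \<le> norm (h $ k)"
          by (auto simp: a_def)
      qed
      have inS: "z + s *\<^sub>R axis j 1 \<in> S" and cl: "dist (z + s *\<^sub>R axis j 1) x < d2"
        if s: "s \<in> closed_segment 0 a" for s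
      proof -
        have "dist (z + s *\<^sub>R axis j 1) x < d" using nq[OF s] h by (simp add: zq dist_norm)
        then show "z + s *\<^sub>R axis j 1 \<in> S" "dist (z + s *\<^sub>R axis j 1) x < d2"
          using D3 by (auto simp: d_def dist_commute)
      qed
      have der: "(\<phi> has_vector_derivative (P j (z + s *\<^sub>R axis j 1) - P j x)) (at s)"
        if s: "s \<in> closed_segment 0 a" for s
      proof -
        let ?q = "z + s *\<^sub>R axis j 1"
        have 1: "((\<lambda>t. t - s) has_vector_derivative 1) (at s)"
          by (auto intro!: derivative_eq_intros simp: has_vector_derivative_def has_real_derivative_iff_has_vector_derivative[symmetric])
        have 2: "((\<lambda>u. f (?q + u *\<^sub>R axis j 1)) has_vector_derivative P j ?q) (at ((\<lambda>t. t - s) s))"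
          using pd[OF inS[OF s]] by simp
        have 3: "(\<lambda>u. f (?q + u *\<^sub>R axis j 1)) \<circ> (\<lambda>t. t - s) = (\<lambda>t. f (z + t *\<^sub>R axis j 1))"
          by (auto simp: fun_eq_iff algebra_simps)
        have "((\<lambda>t. f (z + t *\<^sub>R axis j 1)) has_vector_derivative P j ?q) (at s)"
          using vector_diff_chain_at[OF 1 2] 3 by simp
        moreover have "((\<lambda>t. t *\<^sub>R P j x) has_vector_derivative P j x) (at s)"
          by (auto intro!: derivative_eq_intros)
        ultimately show ?thesis unfolding \<phi>_def by (intro derivative_intros)
      qed
      have "norm (\<phi> a - \<phi> 0) \<le> e/2 * \<bar>a\<bar>"
      proof (rule mvt_1d[OF der])
        fix s assume s: "s \<in> closed_segment 0 a"
        show "norm (P j (z + s *\<^sub>R axis j 1) - P j x) \<le> e/2"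
          using D2[OF cl[OF s]] by (simp add: dist_norm)
      qed (use e in auto)
      also have "\<dots> \<le> e/2 * norm h"
        using e by (simp add: a_def component_le_norm_cart)
      finally have A: "norm (\<phi> a - \<phi> 0) \<le> e/2 * norm h" .
      have B: "norm (f z - f x - (\<Sum>i\<in>I. h$i *\<^sub>R P i x)) \<le> e/2 * norm h"
        using D1 h by (simp add: z_def d_def)
      have eq: "x + proj (insert j I) h = z + a *\<^sub>R axis j 1"
        using zq[of a] by (simp add: proj_def a_def vec_eq_iff)
      have "f (x + proj (insert j I) h) - f x - (\<Sum>i\<in>insert j I. h$i *\<^sub>R P i x)
           = (\<phi> a - \<phi> 0) + (f z - f x - (\<Sum>i\<in>I. h$i *\<^sub>R P i x))"
        using insert.hyps by (simp add: eq \<phi>_def a_def algebra_simps)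
      then have "norm (f (x + proj (insert j I) h) - f x - (\<Sum>i\<in>insert j I. h$i *\<^sub>R P i x))
          \<le> norm (\<phi> a - \<phi> 0) + norm (f z - f x - (\<Sum>i\<in>I. h$i *\<^sub>R P i x))"
        by (metis norm_triangle_ineq)
      then show ?thesis using A B by linarith
    qed
    ultimately show "\<exists>d>0. \<forall>h. norm h < d \<longrightarrow>
           norm (f (x + proj (insert j I) h) - f x - (\<Sum>i\<in>insert j I. h$i *\<^sub>R P i x)) \<le> e * norm h"
      by blast
  qed
qed

lemma partials_diff:
  fixes f :: "real^'n::finite \<Rightarrow> 'b::real_normed_vector"
  assumes S: "open S" "x \<in> S"
    and pd: "\<And>i z. z \<in> S \<Longrightarrow> ((\<lambda>s. f (z + s *\<^sub>R axis i 1)) has_vector_derivative P i z) (at 0)"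
    and pc: "\<And>i. continuous_on S (P i)"
  shows "f differentiable (at x)"
proof -
  have pu: "proj UNIV h = h" for h by (simp add: proj_def vec_eq_iff)
  have C: "\<forall>e>0. \<exists>d>0. \<forall>h. norm h < d \<longrightarrow>
           norm (f (x + h) - f x - (\<Sum>i\<in>UNIV. h$i *\<^sub>R P i x)) \<le> e * norm h"
    using partials_step[OF S pd pc, of UNIV] by (simp add: pu)
  have "(f has_derivative (\<lambda>h. \<Sum>i\<in>UNIV. h$i *\<^sub>R P i x)) (at x)"
    unfolding has_derivative_at_alt
  proof (intro conjI allI impI)
    show "bounded_linear (\<lambda>h. \<Sum>i\<in>UNIV. h$i *\<^sub>R P i x)"
      by (intro bounded_linear_intros bounded_linear_vec_nth)
    fix e :: real assume "e > 0"
    then obtain d where "d > 0" "\<forall>h. norm h < d \<longrightarrow>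
           norm (f (x + h) - f x - (\<Sum>i\<in>UNIV. h$i *\<^sub>R P i x)) \<le> e * norm h" using C by blast
    then show "\<exists>d>0. \<forall>y. norm (y - x) < d \<longrightarrow> norm (f y - f x - (\<Sum>i\<in>UNIV. (y - x)$i *\<^sub>R P i x)) \<le> e * norm (y - x)"
    proof (intro exI[of _ d] conjI allI impI)
      fix y assume "norm (y - x) < d"
      then show "norm (f y - f x - (\<Sum>i\<in>UNIV. (y - x)$i *\<^sub>R P i x)) \<le> e * norm (y - x)"
        using \<open>\<forall>h. norm h < d \<longrightarrow> _\<close>[rule_format, of "y - x"] by simp
    qed (rule \<open>d > 0\<close>)
  qed
  then show ?thesis unfolding differentiable_def by blast
qed



lemma qunit_in: "qunit q \<in> qcarrier q"
  by (cases q) (auto simp: qunit_def intro: range_eqI[of _ _ 0])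

lemma qinv_in: "z \<in> qcarrier q \<Longrightarrow> qinv q z \<in> qcarrier q"
proof (cases q)
  case RealLine
  assume "z \<in> qcarrier q" then obtain r where "z = complex_of_real r" using RealLine by auto
  then show ?thesis using RealLine by (auto simp: qinv_def intro: range_eqI[of _ _ "-r"])
next
  case Integers
  assume "z \<in> qcarrier q" then obtain r where "z = of_int r" using Integers by auto
  then show ?thesis using Integers by (auto simp: qinv_def intro: range_eqI[of _ _ "-r"])
next
  case Circle
  assume "z \<in> qcarrier q" then show ?thesis using Circle by (auto simp: qinv_def norm_inverse)
next
  case (Roots n)
  assume "z \<in> qcarrier q" then show ?thesis using Roots by (auto simp: qinv_def power_inverse)
qed

lemma qshift_in: "z \<in> qcarrier q \<Longrightarrow> qshift q z \<tau> \<in> qcarrier q"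
proof (cases q)
  case RealLine
  assume "z \<in> qcarrier q" then obtain r where "z = complex_of_real r" using RealLine by auto
  then show ?thesis using RealLine by (auto simp: qshift_def intro: range_eqI[of _ _ "r + \<tau>"])
next
  case Circle
  assume "z \<in> qcarrier q" then show ?thesis using Circle by (auto simp: qshift_def norm_mult)
qed (auto simp: qshift_def)

lemma qnonzero: "\<not> additive q \<Longrightarrow> (\<forall>n. q = Roots n \<longrightarrow> n \<ge> 1) \<Longrightarrow> z \<in> qcarrier q \<Longrightarrow> z \<noteq> 0"
  by (cases q) (auto simp: power_0_left split: if_splits)

lemma Nunit_in: "Nunit q K \<in> Ncarrier q K"
  by (auto simp: Nunit_def Ncarrier_def qunit_in)

lemma Ninv_in: "g \<in> Ncarrier q K \<Longrightarrow> Ninv q K g \<in> Ncarrier q K"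
  by (auto simp: Ninv_def Ncarrier_def qinv_in)

lemma Nmul_unit: "Nmul q K (Nunit q K) (Nunit q K) = Nunit q K"
  by (auto simp: Nmul_def Nunit_def qop_def qunit_def fun_eq_iff)

lemma Nidem:
  assumes "c \<in> Ncarrier q K" "Nmul q K c c = c" "\<forall>n. q = Roots n \<longrightarrow> n \<ge> 1"
  shows "c = Nunit q K"
proof
  fix k
  show "c k = Nunit q K k"
  proof (cases "k < K")
    case True
    have e: "qop q (c k) (c k) = c k" using assms(2) True by (metis Nmul_def)
    have cin: "c k \<in> qcarrier q" using assms(1) True by (auto simp: Ncarrier_def)
    show ?thesis
    proof (cases "additive q")
      case True
      then show ?thesis using e \<open>k < K\<close> by (simp add: qop_def Nunit_def qunit_def)
    next
      case False
      have "c k \<noteq> 0" using qnonzero[OF False assms(3) cin] .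
      then have "c k = 1" using e False by (simp add: qop_def)
      then show ?thesis using False \<open>k < K\<close> by (simp add: Nunit_def qunit_def)
    qed
  next
    case False then show ?thesis using assms(1) by (auto simp: Ncarrier_def Nunit_def)
  qed
qed

lemma Dprod_one: "(\<forall>j\<in>set js. D j (h j) = mat 1) \<Longrightarrow> Dprod D h js = mat 1"
  by (induction js) (auto simp: Dprod_def matrix_mul_lid)

lemma Dprod_single:
  "distinct js \<Longrightarrow> m \<in> set js \<Longrightarrow> (\<forall>j\<in>set js. j \<noteq> m \<longrightarrow> D j (h j) = mat 1)
   \<Longrightarrow> Dprod D h js = D m (h m)"
proof (induction js)
  case Nil then show ?case by simp
next
  case (Cons j js)
  show ?case
  proof (cases "j = m")
    case True
    then have "Dprod D h js = mat 1" using Cons.prems by (intro Dprod_one) auto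
    then show ?thesis using True
      by (simp add: Dprod_def matrix_mul_rid)
  next
    case False
    then have "Dprod D h js = D m (h m)" using Cons by auto
    then show ?thesis using False Cons.prems by (simp add: Dprod_def matrix_mul_lid)
  qed
qed

lemma Dprod_cong: "(\<forall>j\<in>set js. a j = b j) \<Longrightarrow> Dprod D a js = Dprod D b js"
  by (induction js) (auto simp: Dprod_def)



lemma D_hom:
  assumes setting: "group_setting M Q K A D" and m: "m \<in> {2..M}"
    and a: "a \<in> Ncarrier (Q m) (K m)" and b: "b \<in> Ncarrier (Q m) (K m)"
  shows "D m (Nmul (Q m) (K m) a b) = D m a ** D m b"
proof -
  note GS = setting[unfolded group_setting_def]
  define E where "E = Hunit M Q K"
  have Hmem: "E(m := c) \<in> Hcarrier M Q K" if c: "c \<in> Ncarrier (Q m) (K m)" for c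
    using c m by (auto simp: Hcarrier_def Tcarrier_def E_def Hunit_def Nunit_in)
  have Dfs: "Dfull M D (E(m := c)) = D m c" for c
    unfolding Dfull_def
    by (subst Dprod_single[where m=m]) (use m GS in \<open>auto simp: E_def Hunit_def\<close>)
  have tail_mem: "tail j (E(m := a)) \<in> Tcarrier Q K {Suc j..M}" if j: "j \<in> {2..M}" for j
    using j m a by (auto simp: Tcarrier_def tail_def E_def Hunit_def Nunit_in)
  have A_unit: "A j (tail j (E(m := a))) (Nunit (Q j) (K j)) = Nunit (Q j) (K j)"
    if j: "j \<in> {2..M}" for j
  proof -
    let ?\<tau> = "tail j (E(m := a))" and ?u = "Nunit (Q j) (K j)"
    have bij: "bij_betw (A j ?\<tau>) (Ncarrier (Q j) (K j)) (Ncarrier (Q j) (K j))"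
      and hom: "\<And>g g'. g \<in> Ncarrier (Q j) (K j) \<Longrightarrow> g' \<in> Ncarrier (Q j) (K j) \<Longrightarrow>
           A j ?\<tau> (Nmul (Q j) (K j) g g') = Nmul (Q j) (K j) (A j ?\<tau> g) (A j ?\<tau> g')"
      using GS j tail_mem[OF j] by blast+
    have cin: "A j ?\<tau> ?u \<in> Ncarrier (Q j) (K j)"
      using bij Nunit_in by (metis bij_betwE)
    have "Nmul (Q j) (K j) (A j ?\<tau> ?u) (A j ?\<tau> ?u) = A j ?\<tau> ?u"
      using hom[OF Nunit_in Nunit_in] by (simp add: Nmul_unit)
    then show ?thesis using Nidem[OF cin] GS j by blast
  qed
  have tm: "tail m (E(m := a)) = tail m E"
    by (auto simp: tail_def fun_eq_iff)
  have Hm: "Hmul M Q K A (E(m := a)) (E(m := b)) = E(m := Nmul (Q m) (K m) a b)"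
  proof
    fix j
    show "Hmul M Q K A (E(m := a)) (E(m := b)) j = (E(m := Nmul (Q m) (K m) a b)) j"
    proof (cases "j \<in> {2..M}")
      case True
      show ?thesis
      proof (cases "j = m")
        case jm: True
        have "A m (tail m E) b = b" using GS m b unfolding E_def by blast
        then show ?thesis using jm True by (simp add: Hmul_def tm)
      next
        case False
        then show ?thesis using True A_unit[OF True]
          by (simp add: Hmul_def E_def Hunit_def Nmul_unit)
      qed
    next
      case False
      then show ?thesis using m by (auto simp: Hmul_def E_def Hunit_def)
    qed
  qed
  have "Dfull M D (Hmul M Q K A (E(m := a)) (E(m := b))) = Dfull M D (E(m := a)) ** Dfull M D (E(m := b))"
    using GS Hmem[OF a] Hmem[OF b] by blast
  then show ?thesis by (simp add: Hm Dfs)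
qed



lemma chart_other: "j \<noteq> m \<Longrightarrow> chart M Q K (y(m := a)) t j = chart M Q K (y(m := b)) t j"
  by (simp add: chart_def fun_eq_iff)

lemma chart_m:
  "chart M Q K (y(m := Nmul (Q m) (K m) a b)) t m = Nmul (Q m) (K m) a (chart M Q K (y(m := b)) t m)"
proof
  fix k
  show "chart M Q K (y(m := Nmul (Q m) (K m) a b)) t m k = Nmul (Q m) (K m) a (chart M Q K (y(m := b)) t m) k"
  proof (cases "k < K m")
    case True
    then show ?thesis
      by (cases "Q m") (auto simp: chart_def contI_def Nmul_def qop_def qshift_def algebra_simps)
  next
    case False
    then show ?thesis by (auto simp: chart_def contI_def Nmul_def)
  qed
qed

lemma chart_in:
  assumes "g \<in> Ncarrier (Q m) (K m)"
  shows "chart M Q K (y(m := g)) t m \<in> Ncarrier (Q m) (K m)"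
  using assms by (auto simp: chart_def contI_def Ncarrier_def qshift_in)

lemma Ninv_Nmul: "Ninv q K (Nmul q K (Ninv q K a) x) = Nmul q K (Ninv q K x) a"
  by (auto simp: Ninv_def Nmul_def qinv_def qop_def fun_eq_iff inverse_mult_distrib mult.commute)

theorem lemma2:
  fixes M m :: nat
    and Q :: "nat \<Rightarrow> quantity" and K :: "nat \<Rightarrow> nat"
    and A :: "nat \<Rightarrow> tuple \<Rightarrow> (nat \<Rightarrow> complex) \<Rightarrow> (nat \<Rightarrow> complex)"
    and D :: "nat \<Rightarrow> (nat \<Rightarrow> complex) \<Rightarrow> real^'n::finite^'n"
    and w0 :: "real^'n" and w :: "nat \<Rightarrow> real^'n"
    and y :: tuple and g g' :: "nat \<Rightarrow> complex"
  assumes setting: "group_setting M Q K A D"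
    and U_open: "open (Uset M Q K D w0)"
    and U_dense: "closure (Uset M Q K D w0) = UNIV"
    and dgwt: "\<forall>m'\<in>{2..M}. DGWT_diffeo M m' Q K D (w m') (Uset M Q K D w0)"
    and m: "m \<in> {2..M}"
    and y: "y \<in> Ycarrier M Q K m"
    and g: "g \<in> Ncarrier (Q m) (K m)"
    and g': "g' \<in> Ncarrier (Q m) (K m)"
  shows "\<bar>det (jacobian M Q K (\<lambda>p. Cm M m Q K D (w m) p (p m))
                 (y(m := Nmul (Q m) (K m) (Ninv (Q m) (K m) g') g)))\<bar>
         = \<bar>det (D m g')\<bar> * \<bar>det (jacobian M Q K (\<lambda>p. Cm M m Q K D (w m) p (p m)) (y(m := g)))\<bar>"
proof -
  define F where "F = (\<lambda>p. Cm M m Q K D (w m) p (p m))"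
  define p1 where "p1 = y(m := Nmul (Q m) (K m) (Ninv (Q m) (K m) g') g)"
  define p2 where "p2 = y(m := g)"
  define f1 where "f1 = (\<lambda>t::real^'n. F (chart M Q K p1 t))"
  define f2 where "f2 = (\<lambda>t::real^'n. F (chart M Q K p2 t))"
  define Dg where "Dg = D m g'"
  have eqf: "f1 t = transpose Dg *v f2 t" for t
  proof -
    let ?x = "chart M Q K p2 t m"
    have xin: "?x \<in> Ncarrier (Q m) (K m)" unfolding p2_def by (rule chart_in[where Q=Q and K=K and m=m, OF g])
    have o: "Dm_other M m D (chart M Q K p1 t) = Dm_other M m D (chart M Q K p2 t)"
      unfolding Dm_other_def p1_def p2_def by (rule Dprod_cong) (auto intro: chart_other)
    have "chart M Q K p1 t m = Nmul (Q m) (K m) (Ninv (Q m) (K m) g') ?x"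
      unfolding p1_def p2_def by (rule chart_m)
    then have "Ninv (Q m) (K m) (chart M Q K p1 t m) = Nmul (Q m) (K m) (Ninv (Q m) (K m) ?x) g'"
      by (simp add: Ninv_Nmul)
    then have "D m (Ninv (Q m) (K m) (chart M Q K p1 t m)) = D m (Ninv (Q m) (K m) ?x) ** Dg"
      using D_hom[OF setting m Ninv_in[OF xin] g'] by (simp add: Dg_def)
    then show ?thesis
      by (simp add: f1_def f2_def F_def Cm_def o vector_matrix_mul_assoc[symmetric] matrix_mul_assoc)
  qed
  obtain S where S0: "0 \<in> S" and sm: "smooth_on S f2"
    using dgwt m y g unfolding DGWT_diffeo_def f2_def F_def p2_def by blast
  have "f2 differentiable (at 0)"
  proof (rule partials_diff[where P="\<lambda>i. iter_pderiv [i] f2"])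
    show "open S" using sm by (simp add: smooth_on_def)
    show "0 \<in> S" by (rule S0)
    fix i z assume "z \<in> S"
    then show "((\<lambda>s. f2 (z + s *\<^sub>R axis i 1)) has_vector_derivative iter_pderiv [i] f2 z) (at 0)"
      using sm unfolding smooth_on_def by (metis iter_pderiv.simps(1))
  next
    fix i show "continuous_on S (iter_pderiv [i] f2)" using sm unfolding smooth_on_def by blast
  qed
  then obtain L where L: "(f2 has_derivative L) (at 0)" unfolding differentiable_def by blast
  have lin: "linear L" using has_derivative_linear[OF L] .
  have L1: "(f1 has_derivative (\<lambda>v. transpose Dg *v L v)) (at 0)"
  proof -
    have "((\<lambda>t. transpose Dg *v f2 t) has_derivative (\<lambda>v. transpose Dg *v L v)) (at 0)"
      by (rule bounded_linear.has_derivative[OF matrix_vector_mul_bounded_linear L])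
    moreover have "f1 = (\<lambda>t. transpose Dg *v f2 t)" using eqf by auto
    ultimately show ?thesis by simp
  qed
  have J1: "jacobian M Q K F p1 = transpose Dg ** matrix L"
    unfolding jacobian_def f1_def[symmetric] frechet_derivative_at[OF L1, symmetric]
    proof -
    have "(\<lambda>v. transpose Dg *v L v) = (\<lambda>v. (transpose Dg ** matrix L) *v v)"
      using matrix_vector_mul(2)[OF lin] by (metis matrix_vector_mul_assoc)
    then show "matrix (\<lambda>v. transpose Dg *v L v) = transpose Dg ** matrix L" by simp
  qed
  have J2: "jacobian M Q K F p2 = matrix L"
    unfolding jacobian_def f2_def[symmetric] frechet_derivative_at[OF L, symmetric] ..
  show ?thesis
    unfolding F_def[symmetric] p1_def[symmetric] p2_def[symmetric] Dg_def[symmetric] J1 J2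
    by (simp add: det_mul det_transpose abs_mult)
qed

end
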